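(* Let $T_e=\{0,6,10,28,36,66,78,\dots\}$ be the set of even triangular numbers and $T_o=\{1,3,15,21,45,55,\dots\}$ the set of odd triangular numbers (a triangular number is an integer of the form $k(k+1)/2$ with $k\ge 0$ an integer). Then for every even integer $n\geq 1$, $$\sum_{t\in T_e,\ t\le n} p\!\left(\frac{n-t}{2}\right)=p_d(n),$$ and for every odd integer $n\geq 1$, $$\sum_{t\in T_o,\ t\le n} p\!\left(\frac{n-t}{2}\right)=p_o(n).$$
   Context: $p(n)$ is the number of partitions of $n$ (with $p(0)=1$), $p_d(n)$ is the number of partitions of $n$ into distinct parts, and $p_o(n)$ is the number of partitions of $n$ into odd parts. In the sums, each triangular number is counted once. *)

theory Defs
  imports Main "HOL-Library.Multiset"
begin

definition partitions :: "nat \<Rightarrow> nat multiset set" where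
  "partitions n = {M. (\<forall>x\<in>#M. 0 < x) \<and> sum_mset M = n}"

definition p :: "nat \<Rightarrow> nat" where
  "p n = card (partitions n)"

definition p_d :: "nat \<Rightarrow> nat" where
  "p_d n = card {M \<in> partitions n. \<forall>x. count M x \<le> 1}"

definition p_o :: "nat \<Rightarrow> nat" where
  "p_o n = card {M \<in> partitions n. \<forall>x\<in>#M. odd x}"

definition triangular :: "nat \<Rightarrow> bool" where
  "triangular t \<longleftrightarrow> (\<exists>k::nat. t = k * (k + 1) div 2)"

end

theory Submission
  imports Defs "HOL-Computational_Algebra.Formal_Power_Series"
begin


definition Sp :: "nat set \<Rightarrow> nat \<Rightarrow> nat multiset set" where
  "Sp A n = {M. set_mset M \<subseteq> A \<and> sum_mset M = n}"
definition Sd :: "nat set \<Rightarrow> nat \<Rightarrow> nat multiset set" where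
  "Sd A n = {M \<in> Sp A n. \<forall>x. count M x \<le> 1}"

lemma mem_le_sum_mset: "(x::nat) \<in># M \<Longrightarrow> x \<le> sum_mset M"
  by (metis le_add1 multi_member_split sum_mset.add_mset)

lemma size_le_sum_mset: "(\<forall>x\<in>#M. (0::nat) < x) \<Longrightarrow> size M \<le> sum_mset M"
  by (induction M) auto

lemma Sp_finite: assumes "0 \<notin> A" shows "finite (Sp A n)"
proof -
  have "Sp A n \<subseteq> mset ` {xs. set xs \<subseteq> {0..n} \<and> length xs \<le> n}"
  proof
    fix M assume M: "M \<in> Sp A n"
    obtain xs where xs: "mset xs = M" using ex_mset by blast
    have pos: "\<forall>x\<in>#M. 0 < x" using M assms unfolding Sp_def by (metis gr0I in_mono mem_Collect_eq)
    have "set xs \<subseteq> {0..n}" using M xs mem_le_sum_mset unfolding Sp_def by fastforce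
    moreover have "length xs \<le> n" using size_le_sum_mset[OF pos] M xs unfolding Sp_def by auto
    ultimately show "M \<in> mset ` {xs. set xs \<subseteq> {0..n} \<and> length xs \<le> n}" using xs by blast
  qed
  thus ?thesis by (rule finite_subset) (intro finite_imageI finite_lists_length_le, simp)
qed

lemma Sd_finite: "0 \<notin> A \<Longrightarrow> finite (Sd A n)"
  using Sp_finite unfolding Sd_def by auto

lemma Sp_rec:
  assumes "j \<notin> A" "0 < j" "0 \<notin> A"
  shows "card (Sp (insert j A) n) = card (Sp A n) + (if j \<le> n then card (Sp (insert j A) (n - j)) else 0)"
proof (cases "j \<le> n")
  case True
  have eq: "Sp (insert j A) n = Sp A n \<union> add_mset j ` Sp (insert j A) (n - j)"
  proof (intro equalityI subsetI)
    fix M assume M: "M \<in> Sp (insert j A) n"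
    show "M \<in> Sp A n \<union> add_mset j ` Sp (insert j A) (n - j)"
    proof (cases "j \<in># M")
      case True
      then obtain M' where M': "M = add_mset j M'" by (meson multi_member_split)
      have "M' \<in> Sp (insert j A) (n - j)" using M M' unfolding Sp_def by auto
      then show ?thesis using M' by blast
    next
      case False
      then have "M \<in> Sp A n" using M unfolding Sp_def by auto
      then show ?thesis by blast
    qed
  next
    fix M assume "M \<in> Sp A n \<union> add_mset j ` Sp (insert j A) (n - j)"
    then show "M \<in> Sp (insert j A) n" using True unfolding Sp_def by (auto simp del: insert_subset)
  qed
  have f: "finite (Sp A n)" "finite (Sp (insert j A) (n - j))" using assms Sp_finite by auto
  have d: "Sp A n \<inter> add_mset j ` Sp (insert j A) (n - j) = {}" proof -
    have "j \<in># add_mset j M" for M by simp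
    moreover have "j \<notin># M" if "M \<in> Sp A n" for M using that assms(1) unfolding Sp_def by blast
    ultimately show ?thesis by blast
  qed
  have "card (add_mset j ` Sp (insert j A) (n - j)) = card (Sp (insert j A) (n - j))"
    by (rule card_image) (simp add: inj_on_def)
  then show ?thesis using True eq card_Un_disjoint[OF f(1) finite_imageI[OF f(2)] d] by simp
next
  case False
  have "Sp (insert j A) n = Sp A n"
  proof (intro equalityI subsetI)
    fix M assume M: "M \<in> Sp (insert j A) n"
    have "j \<notin># M" using M False mem_le_sum_mset unfolding Sp_def by force
    then show "M \<in> Sp A n" using M unfolding Sp_def by auto
  qed (auto simp: Sp_def)
  then show ?thesis using False by simp
qed
lemma Sd_rec:
  assumes "j \<notin> A" "0 < j" "0 \<notin> A"
  shows "card (Sd (insert j A) n) = card (Sd A n) + (if j \<le> n then card (Sd A (n - j)) else 0)"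
proof (cases "j \<le> n")
  case True
  have eq: "Sd (insert j A) n = Sd A n \<union> add_mset j ` Sd A (n - j)"
  proof (intro equalityI subsetI)
    fix M assume M: "M \<in> Sd (insert j A) n"
    show "M \<in> Sd A n \<union> add_mset j ` Sd A (n - j)"
    proof (cases "j \<in># M")
      case True
      then obtain M' where M': "M = add_mset j M'" by (meson multi_member_split)
      have c: "count M' x \<le> 1" for x using M M' unfolding Sd_def
        by (metis (no_types, lifting) count_add_mset le_SucI mem_Collect_eq nat_le_linear order_trans)
      have "count M j \<le> 1" using M unfolding Sd_def by blast
      hence "j \<notin># M'" using M' by (simp add: not_in_iff)
      hence "set_mset M' \<subseteq> A" using M M' unfolding Sd_def Sp_def by auto
      have "M' \<in> Sd A (n - j)" using M M' c \<open>set_mset M' \<subseteq> A\<close> unfolding Sd_def Sp_def by auto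
      then show ?thesis using M' by blast
    next
      case False
      then have "M \<in> Sd A n" using M unfolding Sd_def Sp_def by auto
      then show ?thesis by blast
    qed
  next
    fix M assume "M \<in> Sd A n \<union> add_mset j ` Sd A (n - j)"
    then show "M \<in> Sd (insert j A) n"
    proof
      assume "M \<in> Sd A n" then show ?thesis unfolding Sd_def Sp_def by auto
    next
      assume "M \<in> add_mset j ` Sd A (n - j)"
      then obtain M' where M': "M = add_mset j M'" "M' \<in> Sd A (n - j)" by blast
      have "j \<notin># M'" using M'(2) assms(1) unfolding Sd_def Sp_def by blast
      hence "count M' j = 0" by (simp add: not_in_iff)
      moreover have "count M' x \<le> 1" for x using M'(2) unfolding Sd_def by blast
      ultimately have "count M x \<le> 1" for x using M'(1) by (cases "x = j") auto
      moreover have "set_mset M \<subseteq> insert j A" using M' unfolding Sd_def Sp_def by auto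
      moreover have "sum_mset M = n" using M' True unfolding Sd_def Sp_def by auto
      ultimately show ?thesis unfolding Sd_def Sp_def by blast
    qed
  qed
  have f: "finite (Sd A n)" "finite (Sd A (n - j))" using assms Sd_finite by auto
  have d: "Sd A n \<inter> add_mset j ` Sd A (n - j) = {}"
  proof -
    have "j \<in># add_mset j M" for M by simp
    moreover have "j \<notin># M" if "M \<in> Sd A n" for M using that assms(1) unfolding Sd_def Sp_def by blast
    ultimately show ?thesis by blast
  qed
  have "card (add_mset j ` Sd A (n - j)) = card (Sd A (n - j))"
    by (rule card_image) (simp add: inj_on_def)
  then show ?thesis using True eq card_Un_disjoint[OF f(1) finite_imageI[OF f(2)] d] by simp
next
  case False
  have "Sd (insert j A) n = Sd A n"
  proof (intro equalityI subsetI)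
    fix M assume M: "M \<in> Sd (insert j A) n"
    have "j \<notin># M" using M False mem_le_sum_mset unfolding Sd_def Sp_def by force
    then show "M \<in> Sd A n" using M unfolding Sd_def Sp_def by auto
  qed (auto simp: Sd_def Sp_def)
  then show ?thesis using False by simp
qed

definition PP :: "nat \<Rightarrow> nat \<Rightarrow> nat" where "PP a m = card (Sp {1..a} m)"
definition DD :: "nat \<Rightarrow> nat \<Rightarrow> nat" where "DD a m = card (Sd {1..a} m)"
definition Oc :: "nat \<Rightarrow> nat \<Rightarrow> nat" where "Oc a m = card (Sp {j. odd j \<and> j \<le> a} m)"

lemma PP_0: "PP 0 m = (if m = 0 then 1 else 0)"
proof -
  have "Sp {} m = (if m = 0 then {{#}} else {})" unfolding Sp_def by auto
  thus ?thesis unfolding PP_def by simp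
qed

lemma DD_0: "DD 0 m = (if m = 0 then 1 else 0)"
proof -
  have "Sd {} m = (if m = 0 then {{#}} else {})" unfolding Sd_def Sp_def by auto
  thus ?thesis unfolding DD_def by simp
qed

lemma Oc_0: "Oc 0 m = (if m = 0 then 1 else 0)"
proof -
  have "{j::nat. odd j \<and> j \<le> 0} = {}" using odd_pos by auto
  moreover have "Sp {} m = (if m = 0 then {{#}} else {})" unfolding Sp_def by auto
  ultimately show ?thesis unfolding Oc_def by (simp only:) simp
qed

lemma PP_Suc: "PP (Suc a) m = PP a m + (if Suc a \<le> m then PP (Suc a) (m - Suc a) else 0)"
proof -
  have "{1..Suc a} = insert (Suc a) {1..a}" by auto
  thus ?thesis unfolding PP_def using Sp_rec[of "Suc a" "{1..a}" m] by simp
qed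

lemma DD_Suc: "DD (Suc a) m = DD a m + (if Suc a \<le> m then DD a (m - Suc a) else 0)"
proof -
  have "{1..Suc a} = insert (Suc a) {1..a}" by auto
  thus ?thesis unfolding DD_def using Sd_rec[of "Suc a" "{1..a}" m] by simp
qed

lemma Oc_Suc: "Oc (Suc a) m = Oc a m + (if odd (Suc a) \<and> Suc a \<le> m then Oc (Suc a) (m - Suc a) else 0)"
proof (cases "odd (Suc a)")
  case True
  have "{j. odd j \<and> j \<le> Suc a} = insert (Suc a) {j. odd j \<and> j \<le> a}" using True by auto
  moreover have "0 \<notin> {j::nat. odd j \<and> j \<le> a}" by simp
  ultimately show ?thesis unfolding Oc_def using Sp_rec[of "Suc a" "{j. odd j \<and> j \<le> a}" m] True by simp
next
  case False
  have "{j. odd j \<and> j \<le> Suc a} = {j. odd j \<and> j \<le> a}" using False le_Suc_eq by auto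
  thus ?thesis unfolding Oc_def using False by simp
qed

lemma partitions_eq: "n \<le> a \<Longrightarrow> partitions n = Sp {1..a} n"
proof (intro equalityI subsetI)
  fix M assume a: "n \<le> a" and M: "M \<in> partitions n"
  have "x \<in> {1..a}" if "x \<in># M" for x
    using M mem_le_sum_mset[OF that] a that unfolding partitions_def by force
  then show "M \<in> Sp {1..a} n" using M unfolding partitions_def Sp_def by auto
next
  fix M assume "M \<in> Sp {1..a} n"
  then show "M \<in> partitions n" unfolding partitions_def Sp_def by force
qed

lemma p_eq: "n \<le> a \<Longrightarrow> p n = PP a n"
  unfolding p_def PP_def using partitions_eq by simp

lemma p_d_eq: "n \<le> a \<Longrightarrow> p_d n = DD a n"
  unfolding p_d_def DD_def Sd_def using partitions_eq by simp

lemma p_o_eq: "n \<le> a \<Longrightarrow> p_o n = Oc a n"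
proof -
  assume a: "n \<le> a"
  have "{M \<in> partitions n. \<forall>x\<in>#M. odd x} = Sp {j. odd j \<and> j \<le> a} n"
  proof (intro equalityI subsetI)
    fix M assume M: "M \<in> {M \<in> partitions n. \<forall>x\<in>#M. odd x}"
    have "x \<le> a" if "x \<in># M" for x
      using M mem_le_sum_mset[OF that] a unfolding partitions_def by force
    then show "M \<in> Sp {j. odd j \<and> j \<le> a} n" using M unfolding partitions_def Sp_def by auto
  next
    fix M assume "M \<in> Sp {j. odd j \<and> j \<le> a} n"
    then show "M \<in> {M \<in> partitions n. \<forall>x\<in>#M. odd x}" unfolding partitions_def Sp_def
      by (auto simp: odd_pos)
  qed
  thus ?thesis unfolding p_o_def Oc_def by simp
qed


fun G :: "nat \<Rightarrow> nat \<Rightarrow> int fps" where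
  "G n 0 = 1"
| "G 0 (Suc j) = 0"
| "G (Suc n) (Suc j) = G n j + fps_X^(2*Suc j) * G n (Suc j)"

primrec qp :: "nat \<Rightarrow> int fps" where
  "qp 0 = 1"
| "qp (Suc m) = qp m * (1 - fps_X^(2*Suc m))"

lemma G_gt: "n < j \<Longrightarrow> G n j = 0"
proof (induction n arbitrary: j)
  case 0 then show ?case by (cases j) auto
next
  case (Suc n) then show ?case by (cases j) auto
qed

lemma G_nn: "G n n = 1"
  by (induction n) (auto simp: G_gt)

lemma qp_0: "fps_nth (qp m) 0 = 1"
  by (induction m) auto

lemma qp_nz: "qp m \<noteq> 0"
  using qp_0[of m] by (metis fps_zero_nth zero_neq_one)

lemma G_closed: "j \<le> n \<Longrightarrow> G n j * (qp j * qp (n - j)) = qp n"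
proof (induction n arbitrary: j)
  case 0 then show ?case by simp
next
  case (Suc n)
  show ?case
  proof (cases j)
    case 0 then show ?thesis by simp
  next
    case (Suc j')
    have j': "j' \<le> n" using Suc.prems Suc by simp
    have e1: "G n j' * (qp (Suc j') * qp (Suc n - Suc j')) = qp n * (1 - fps_X^(2*Suc j'))"
    proof -
      have "G n j' * (qp (Suc j') * qp (Suc n - Suc j')) = (G n j' * (qp j' * qp (n - j'))) * (1 - fps_X^(2*Suc j'))"
        by (simp add: algebra_simps)
      also have "\<dots> = qp n * (1 - fps_X^(2*Suc j'))" using Suc.IH[OF j'] by simp
      finally show ?thesis .
    qed
    have e2: "fps_X^(2*Suc j') * G n (Suc j') * (qp (Suc j') * qp (Suc n - Suc j'))
              = qp n * (fps_X^(2*Suc j') - fps_X^(2*Suc n))"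
    proof (cases "j' = n")
      case True
      then show ?thesis by (simp add: G_gt)
    next
      case False
      then have lt: "Suc j' \<le> n" using j' by simp
      then obtain d where d: "n - j' = Suc d" "n - Suc j' = d" by (metis Suc_diff_le diff_Suc_Suc)
      have qq: "qp (Suc n - Suc j') = qp (n - Suc j') * (1 - fps_X^(2*(n - j')))"
        using d by simp
      have "fps_X^(2*Suc j') * G n (Suc j') * (qp (Suc j') * qp (Suc n - Suc j'))
          = fps_X^(2*Suc j') * (1 - fps_X^(2*(n - j'))) * (G n (Suc j') * (qp (Suc j') * qp (n - Suc j')))"
        unfolding qq by (simp only: mult_ac)
      also have "\<dots> = fps_X^(2*Suc j') * (1 - fps_X^(2*(n - j'))) * qp n"
        using Suc.IH[OF lt] by simp
      also have "\<dots> = qp n * (fps_X^(2*Suc j') - fps_X^(2*Suc j') * fps_X^(2*(n - j')))"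
        by (simp add: algebra_simps)
      also have "fps_X^(2*Suc j') * fps_X^(2*(n - j')) = (fps_X::int fps)^(2*Suc n)"
        unfolding power_add[symmetric] using j' by (simp add: algebra_simps)
      finally show ?thesis .
    qed
    have gen: "a*(1-y) + a*(y-z) = a*(1-z)" for a y z :: "int fps" by (simp add: algebra_simps)
    have "G (Suc n) j * (qp j * qp (Suc n - j))
        = (G n j' + fps_X^(2*Suc j') * G n (Suc j')) * (qp (Suc j') * qp (Suc n - Suc j'))"
      by (simp only: Suc G.simps(3))
    also have "\<dots> = G n j' * (qp (Suc j') * qp (Suc n - Suc j')) + fps_X^(2*Suc j') * G n (Suc j') * (qp (Suc j') * qp (Suc n - Suc j'))"
      by (rule distrib_right)
    also have "\<dots> = qp n * (1 - fps_X^(2*Suc n))" unfolding e1 e2 by (rule gen)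
    also have "\<dots> = qp (Suc n)" by (simp only: qp.simps)
    finally show ?thesis .
  qed
qed

lemma G_sym: "j \<le> n \<Longrightarrow> G n (n - j) = G n j"
proof -
  assume j: "j \<le> n"
  have "G n (n - j) * (qp j * qp (n - j)) = G n j * (qp j * qp (n - j))"
    using G_closed[OF j] G_closed[of "n - j" n] j by (simp add: algebra_simps)
  moreover have "qp j * qp (n - j) \<noteq> 0" using qp_nz by simp
  ultimately show ?thesis by simp
qed

lemma G_P2: "1 \<le> j \<Longrightarrow> j \<le> n \<Longrightarrow> G (Suc n) j = G n j + fps_X^(2*(Suc n - j)) * G n (j - 1)"
proof -
  assume j: "1 \<le> j" "j \<le> n"
  obtain i where i: "Suc n - j = Suc i" "n - j = i" using j by (metis Suc_diff_le diff_Suc_Suc)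
  have "G (Suc n) j = G (Suc n) (Suc n - j)" using G_sym[of j "Suc n"] j by simp
  also have "\<dots> = G n i + fps_X^(2*Suc i) * G n (Suc i)" using i by simp
  also have "G n i = G n j" using G_sym[of j n] j i by simp
  also have "G n (Suc i) = G n (j - 1)" using G_sym[of "j - 1" n] j i by (simp add: Suc_diff_le)
  finally show ?thesis using i by simp
qed

lemma G_odd: "odd i \<Longrightarrow> fps_nth (G n j) i = 0"
proof (induction n j arbitrary: i rule: G.induct)
  case (3 n j)
  have a: "fps_nth (G n j) i = 0" using 3 by blast
  have b: "fps_nth (fps_X^(2*Suc j) * G n (Suc j)) i = 0"
  proof (cases "i < 2 * Suc j")
    case True then show ?thesis by (simp only: fps_X_power_mult_nth if_True)
  next
    case False
    then have "odd (i - 2 * Suc j)" using 3(3) by simp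
    then show ?thesis using False 3(2) by (simp only: fps_X_power_mult_nth if_False)
  qed
  show ?case by (simp only: G.simps(3) fps_add_nth a b add_0)
qed (auto intro: odd_pos)

lemma PP_zero: "PP a 0 = 1"
  by (induction a) (auto simp: PP_0 PP_Suc)

lemma G_box: "m \<le> b \<Longrightarrow> fps_nth (G (a + b) a) (2*m) = int (PP a m)"
proof (induction a arbitrary: b m)
  case 0 then show ?case by (simp add: PP_0)
next
  case (Suc a)
  note IHa = Suc.IH
  have "\<forall>m. m \<le> b \<longrightarrow> fps_nth (G (Suc a + b) (Suc a)) (2*m) = int (PP (Suc a) m)" for b
  proof (induction b)
    case 0 then show ?case using G_nn by (simp add: PP_zero)
  next
    case (Suc b)
    show ?case
    proof (intro allI impI)
      fix m assume m: "m \<le> Suc b"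
      have eq: "G (Suc a + Suc b) (Suc a) = G (a + Suc b) a + fps_X^(2*Suc a) * G (Suc a + b) (Suc a)"
        by simp
      have t1: "fps_nth (G (a + Suc b) a) (2*m) = int (PP a m)" using IHa m by blast
      have t2: "fps_nth (fps_X^(2*Suc a) * G (Suc a + b) (Suc a)) (2*m)
          = (if Suc a \<le> m then int (PP (Suc a) (m - Suc a)) else 0)"
      proof (cases "Suc a \<le> m")
        case True
        have "2*m - 2*Suc a = 2*(m - Suc a)" by simp
        moreover have "m - Suc a \<le> b" using m by simp
        ultimately have "fps_nth (G (Suc a + b) (Suc a)) (2*m - 2*Suc a) = int (PP (Suc a) (m - Suc a))"
          using Suc.IH by simp
        moreover have "\<not> 2*m < 2*Suc a" using True by simp
        ultimately show ?thesis using True by (simp only: fps_X_power_mult_nth if_False if_True)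
      next
        case False then have "2*m < 2*Suc a" by simp
        then show ?thesis using False by (simp only: fps_X_power_mult_nth if_False if_True)
      qed
      show "fps_nth (G (Suc a + Suc b) (Suc a)) (2*m) = int (PP (Suc a) m)"
        unfolding eq fps_add_nth t1 t2 PP_Suc[of a m] by simp
    qed
  qed
  then show ?case using Suc.prems by blast
qed



primrec Dp :: "nat \<Rightarrow> int fps" where
  "Dp 0 = 1"
| "Dp (Suc N) = Dp N * (1 + fps_X^(Suc N))"

lemma Dp_nth: "fps_nth (Dp N) n = int (DD N n)"
proof (induction N arbitrary: n)
  case 0 then show ?case by (simp add: DD_0)
next
  case (Suc N)
  have "fps_nth (Dp (Suc N)) n = fps_nth (Dp N) n + fps_nth (Dp N * fps_X^(Suc N)) n"
    by (simp only: Dp.simps distrib_left mult_1_right fps_add_nth)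
  also have "\<dots> = int (DD N n) + (if n < Suc N then 0 else int (DD N (n - Suc N)))"
    by (simp only: fps_X_power_mult_right_nth Suc.IH)
  also have "\<dots> = int (DD (Suc N) n)" by (simp add: DD_Suc)
  finally show ?case .
qed

definition T :: "nat \<Rightarrow> nat" where "T k = k * (k + 1) div 2"

lemma T_Suc: "T (Suc k) = T k + Suc k"
proof -
  have "Suc k * (Suc k + 1) = k * (k + 1) + 2 * Suc k" by (simp add: algebra_simps)
  thus ?thesis unfolding T_def by simp
qed

lemma T_ge: "k \<le> T k"
  by (induction k) (auto simp: T_Suc)

definition aa :: "nat \<Rightarrow> nat \<Rightarrow> int fps" where
  "aa N k = (if k \<le> N then fps_X^(T k) * G N ((N - k) div 2) else 0)"

definition sig :: "nat \<Rightarrow> nat \<Rightarrow> nat" where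
  "sig N k = (if k = N then N else if even (N - k) then k + 1 else if k = 0 then 0 else k - 1)"

lemma sig_le: "k \<le> N \<Longrightarrow> sig N k \<le> N"
  unfolding sig_def by auto

lemma sig_sig: assumes k: "k \<le> N" shows "sig N (sig N k) = k"
proof (cases "k = N")
  case True then show ?thesis unfolding sig_def by simp
next
  case ne: False
  show ?thesis
  proof (cases "even (N - k)")
    case True
    have s: "sig N k = Suc k" using ne True unfolding sig_def by simp
    have "N - k \<noteq> 1" using True by (metis odd_one)
    hence "Suc k \<noteq> N" by auto
    moreover have "odd (N - Suc k)" using True ne k by (metis Suc_diff_Suc diff_diff_cancel diff_le_self even_Suc le_neq_implies_less)
    ultimately show ?thesis unfolding s unfolding sig_def by simp
  next
    case False
    show ?thesis
    proof (cases "k = 0")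
      case True
      then show ?thesis using False ne unfolding sig_def by simp
    next
      case kp: False
      have s: "sig N k = k - 1" using ne False kp unfolding sig_def by simp
      have "k - 1 \<noteq> N" using k kp by simp
      moreover have "N - (k - 1) = Suc (N - k)" using kp k by simp
      hence "even (N - (k - 1))" using False by simp
      ultimately show ?thesis unfolding s unfolding sig_def using kp by simp
    qed
  qed
qed

lemma sig_bij: "bij_betw (sig N) {..N} {..N}"
  by (rule bij_betw_byWitness[where f' = "sig N"]) (auto simp: sig_le sig_sig)

lemma step_k:
  assumes k: "k < N"
  shows "aa (Suc N) k = aa N k + fps_X^(Suc N) * aa N (sig N k)"
proof (cases "even (N - k)")
  case True
  define j where "j = (N - k) div 2"
  have j2: "N - k = 2 * j" using True j_def by simp
  have j1: "1 \<le> j" "j \<le> N" using j2 k by auto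
  have a1: "(Suc N - k) div 2 = j" using j2 k by simp
  have a2: "(N - Suc k) div 2 = j - 1" using j2 k by simp
  have s: "sig N k = Suc k" using True k unfolding sig_def by simp
  have ex: "T k + 2 * (Suc N - j) = Suc N + T (Suc k)" using j2 k by (simp add: T_Suc)
  have "aa (Suc N) k = fps_X^(T k) * G (Suc N) j" unfolding aa_def using k a1 by simp
  also have "\<dots> = fps_X^(T k) * G N j + fps_X^(T k) * fps_X^(2*(Suc N - j)) * G N (j - 1)"
    using G_P2[OF j1] by (simp add: algebra_simps)
  also have "fps_X^(T k) * fps_X^(2*(Suc N - j)) = (fps_X::int fps)^(Suc N) * fps_X^(T (Suc k))"
    unfolding power_add[symmetric] ex ..
  finally show ?thesis unfolding aa_def s using k a2 j_def by (simp add: algebra_simps)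
next
  case False
  define j where "j = (N - k) div 2"
  have j2: "N - k = Suc (2 * j)" using False j_def by presburger
  have a1: "(Suc N - k) div 2 = Suc j" using j2 k by simp
  have e0: "aa (Suc N) k = fps_X^(T k) * G N j + fps_X^(T k) * fps_X^(2*Suc j) * G N (Suc j)"
    unfolding aa_def using k a1 by (simp add: algebra_simps)
  show ?thesis
  proof (cases "k = 0")
    case True
    have s: "sig N k = 0" using True False k unfolding sig_def by simp
    have "G N (Suc j) = G N j" using G_sym[of j N] j2 True by simp
    moreover have "2 * Suc j = Suc N" using j2 True by simp
    ultimately show ?thesis using e0 unfolding s aa_def using True j_def T_def by simp
  next
    case kpos: False
    have s: "sig N k = k - 1" using kpos False k unfolding sig_def by simp
    have a2: "(N - (k - 1)) div 2 = Suc j" using j2 k kpos by simp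
    have ex: "T k + 2 * Suc j = Suc N + T (k - 1)"
    proof -
      obtain k' where "k = Suc k'" using kpos by (cases k) auto
      then show ?thesis using j2 k by (simp add: T_Suc)
    qed
    have "fps_X^(T k) * fps_X^(2*Suc j) = (fps_X::int fps)^(Suc N) * fps_X^(T (k - 1))"
      unfolding power_add[symmetric] ex ..
    moreover have "k - 1 \<le> N" using k by simp
    ultimately show ?thesis using e0 unfolding s aa_def using k a1 a2 j_def by (simp add: algebra_simps)
  qed
qed

lemma step_N: "aa (Suc N) N = aa N N"
  unfolding aa_def by simp

lemma step_top: "aa (Suc N) (Suc N) = fps_X^(Suc N) * aa N N"
  unfolding aa_def by (simp add: T_Suc power_add)

lemma Dp_gauss: "Dp N = (\<Sum>k\<le>N. aa N k)"
proof (induction N)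
  case 0 then show ?case by (simp add: aa_def T_def)
next
  case (Suc N)
  have A: "(\<Sum>k\<le>N. aa (Suc N) k) = (\<Sum>k\<le>N. aa N k) + (\<Sum>k<N. fps_X^(Suc N) * aa N (sig N k))"
  proof -
    have "(\<Sum>k\<le>N. aa (Suc N) k) = (\<Sum>k<N. aa (Suc N) k) + aa (Suc N) N"
      by (simp add: lessThan_Suc_atMost[symmetric])
    also have "(\<Sum>k<N. aa (Suc N) k) = (\<Sum>k<N. aa N k) + (\<Sum>k<N. fps_X^(Suc N) * aa N (sig N k))"
      by (simp add: step_k sum.distrib)
    finally show ?thesis by (simp add: step_N lessThan_Suc_atMost[symmetric] algebra_simps)
  qed
  have B: "(\<Sum>k<N. fps_X^(Suc N) * aa N (sig N k)) + fps_X^(Suc N) * aa N N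
        = fps_X^(Suc N) * (\<Sum>k\<le>N. aa N (sig N k))"
  proof -
    have "sig N N = N" unfolding sig_def by simp
    then show ?thesis by (simp add: lessThan_Suc_atMost[symmetric] sum_distrib_left distrib_left)
  qed
  have C: "(\<Sum>k\<le>N. aa N (sig N k)) = (\<Sum>k\<le>N. aa N k)"
    using sum.reindex_bij_betw[OF sig_bij, of "aa N"] by simp
  have "(\<Sum>k\<le>Suc N. aa (Suc N) k) = (\<Sum>k\<le>N. aa (Suc N) k) + aa (Suc N) (Suc N)" by simp
  also have "\<dots> = (\<Sum>k\<le>N. aa N k) + fps_X^(Suc N) * (\<Sum>k\<le>N. aa N k)"
    using A B C step_top by (simp add: algebra_simps)
  also have "\<dots> = Dp (Suc N)" using Suc.IH by (simp add: algebra_simps)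
  finally show ?case by simp
qed



definition Op :: "nat \<Rightarrow> int fps" where "Op a = Abs_fps (\<lambda>n. int (Oc a n))"

primrec OddP :: "nat \<Rightarrow> int fps" where
  "OddP 0 = 1"
| "OddP (Suc M) = OddP M * (if odd (Suc M) then 1 - fps_X^(Suc M) else 1)"

primrec Qp :: "nat \<Rightarrow> int fps" where
  "Qp 0 = 1"
| "Qp (Suc M) = Qp M * (1 - fps_X^(Suc M))"

primrec Rp :: "nat \<Rightarrow> nat \<Rightarrow> int fps" where
  "Rp N 0 = 1"
| "Rp N (Suc M) = Rp N M * (1 - fps_X^(N + Suc M))"

lemma Op_0: "Op 0 = 1"
  by (rule fps_ext) (simp add: Op_def Oc_0 fps_one_nth)

lemma Op_Suc: "Op (Suc a) * (if odd (Suc a) then 1 - fps_X^(Suc a) else 1) = Op a"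
proof (cases "odd (Suc a)")
  case True
  show ?thesis
  proof (rule fps_ext)
    fix n
    have "fps_nth (Op (Suc a) * (1 - fps_X^(Suc a))) n
        = fps_nth (Op (Suc a)) n - fps_nth (Op (Suc a) * fps_X^(Suc a)) n"
      by (simp only: right_diff_distrib mult_1_right fps_sub_nth)
    also have "\<dots> = int (Oc (Suc a) n) - (if n < Suc a then 0 else int (Oc (Suc a) (n - Suc a)))"
      by (simp only: fps_X_power_mult_right_nth Op_def fps_nth_Abs_fps)
    also have "\<dots> = int (Oc a n)" using True by (simp add: Oc_Suc[of a n])
    finally show "fps_nth (Op (Suc a) * (if odd (Suc a) then 1 - fps_X^(Suc a) else 1)) n = fps_nth (Op a) n"
      using True by (simp add: Op_def)
  qed
next
  case False
  then show ?thesis unfolding Op_def by (simp add: Oc_Suc)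
qed

lemma Op_OddP: "Op M * OddP M = 1"
proof (induction M)
  case 0 then show ?case by (simp add: Op_0)
next
  case (Suc M)
  have "Op (Suc M) * OddP (Suc M) = (Op (Suc M) * (if odd (Suc M) then 1 - fps_X^(Suc M) else 1)) * OddP M"
    by (simp only: OddP.simps mult_ac)
  also have "\<dots> = 1" using Suc.IH by (simp only: Op_Suc)
  finally show ?case .
qed

lemma Dp_Qp: "Dp N * Qp N = qp N"
proof (induction N)
  case 0 then show ?case by simp
next
  case (Suc N)
  have e: "(1 + fps_X^(Suc N)) * (1 - fps_X^(Suc N)) = (1 - fps_X^(2 * Suc N) :: int fps)"
    by (simp add: algebra_simps power_mult[symmetric] mult.commute[of 2] power2_eq_square power_mult)
  have "Dp (Suc N) * Qp (Suc N) = (Dp N * Qp N) * ((1 + fps_X^(Suc N)) * (1 - fps_X^(Suc N)))"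
    by (simp only: Dp.simps Qp.simps mult_ac)
  also have "\<dots> = qp (Suc N)" unfolding e Suc.IH by simp
  finally show ?case .
qed

lemma Qp_double: "Qp (2 * N) = OddP (2 * N) * qp N"
proof (induction N)
  case 0 then show ?case by simp
next
  case (Suc N)
  have s: "2 * Suc N = Suc (Suc (2 * N))" by simp
  have o: "odd (Suc (2 * N))" "\<not> odd (Suc (Suc (2 * N)))" by auto
  have "Qp (2 * Suc N) = Qp (2 * N) * (1 - fps_X^(Suc (2 * N))) * (1 - fps_X^(2 * Suc N))"
    unfolding s by simp
  also have "\<dots> = OddP (2 * N) * (1 - fps_X^(Suc (2 * N))) * (qp N * (1 - fps_X^(2 * Suc N)))"
    unfolding Suc.IH by (simp only: mult_ac)
  also have "\<dots> = OddP (2 * Suc N) * qp (Suc N)"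
  proof -
    have "OddP (Suc (Suc (2*N))) = OddP (2*N) * (1 - fps_X^(Suc (2*N)))" by simp
    moreover have "qp (Suc N) = qp N * (1 - fps_X^(2 * Suc N))" by simp
    ultimately show ?thesis unfolding s by (simp only: mult_ac)
  qed
  finally show ?case .
qed

lemma Qp_add: "Qp (N + M) = Qp N * Rp N M"
  by (induction M) (simp_all add: algebra_simps)

lemma Rp_nth: "i \<le> N \<Longrightarrow> fps_nth (Rp N M) i = (if i = 0 then 1 else 0)"
proof (induction M)
  case 0 then show ?case by (simp add: fps_one_nth)
next
  case (Suc M)
  have "fps_nth (Rp N (Suc M)) i = fps_nth (Rp N M) i - fps_nth (Rp N M * fps_X^(N + Suc M)) i"
    by (simp only: Rp.simps right_diff_distrib mult_1_right fps_sub_nth)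
  also have "\<dots> = fps_nth (Rp N M) i"
  proof -
    have "i < N + Suc M" using Suc.prems by simp
    then show ?thesis by (simp only: fps_X_power_mult_right_nth if_True)
  qed
  finally show ?case using Suc by simp
qed

lemma Qp_nz: "Qp N \<noteq> 0"
proof -
  have "fps_nth (Qp N) 0 = 1" by (induction N) auto
  thus ?thesis by (metis fps_zero_nth zero_neq_one)
qed

lemma Dp_eq: "Dp N = Rp N N * Op (2 * N)"
proof -
  have "Qp N * (Dp N * OddP (2 * N)) = Qp N * Rp N N"
  proof -
    have "Qp N * (Dp N * OddP (2 * N)) = (Dp N * Qp N) * OddP (2 * N)" by (simp only: mult_ac)
    also have "\<dots> = Qp (2 * N)" unfolding Dp_Qp Qp_double by (simp only: mult_ac)
    also have "\<dots> = Qp N * Rp N N" using Qp_add[of N N] by (simp add: mult_2)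
    finally show ?thesis .
  qed
  hence e: "Dp N * OddP (2 * N) = Rp N N" using Qp_nz by simp
  have "Dp N = Dp N * (Op (2 * N) * OddP (2 * N))" using Op_OddP by simp
  also have "\<dots> = (Dp N * OddP (2 * N)) * Op (2 * N)" by (simp only: mult_ac)
  also have "\<dots> = Rp N N * Op (2 * N)" using e by simp
  finally show ?thesis .
qed

lemma mult_trunc:
  fixes f g :: "int fps"
  assumes "\<forall>i\<le>N. fps_nth f i = (if i = 0 then 1 else 0)" "n \<le> N"
  shows "fps_nth (f * g) n = fps_nth g n"
proof -
  have "fps_nth (f * g) n = (\<Sum>i=0..n. fps_nth f i * fps_nth g (n - i))" by (rule fps_mult_nth)
  also have "\<dots> = (\<Sum>i=0..n. if i = 0 then fps_nth g n else 0)"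
    by (rule sum.cong) (use assms in auto)
  also have "\<dots> = fps_nth g n" by simp
  finally show ?thesis .
qed

lemma euler: "p_o n = p_d n"
proof -
  have "int (p_d n) = fps_nth (Dp n) n" using Dp_nth p_d_eq[of n n] by simp
  also have "\<dots> = fps_nth (Op (2 * n)) n" unfolding Dp_eq
    by (rule mult_trunc[where N = n]) (auto simp: Rp_nth)
  also have "\<dots> = int (p_o n)" using p_o_eq[of n "2 * n"] by (simp add: Op_def)
  finally show ?thesis by simp
qed



lemma T_strict: "strict_mono T"
  unfolding strict_mono_Suc_iff by (simp add: T_Suc)

lemma coeff_k:
  assumes k: "k \<le> 3 * n + 1"
  shows "fps_nth (aa (3 * n + 1) k) n
       = (if T k \<le> n \<and> even (n - T k) then int (p ((n - T k) div 2)) else 0)"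
proof -
  define N where "N = 3 * n + 1"
  define a where "a = (N - k) div 2"
  have aa: "aa N k = fps_X^(T k) * G N a" unfolding aa_def a_def N_def using k by simp
  show ?thesis
  proof (cases "T k \<le> n")
    case False
    then show ?thesis using aa unfolding N_def by (simp add: fps_X_power_mult_nth)
  next
    case True
    have kn: "k \<le> n" using True T_ge[of k] by simp
    have e: "fps_nth (aa N k) n = fps_nth (G N a) (n - T k)"
      using aa True by (simp add: fps_X_power_mult_nth)
    show ?thesis
    proof (cases "even (n - T k)")
      case False
      then show ?thesis using e G_odd True unfolding N_def by simp
    next
      case ev: True
      define m where "m = (n - T k) div 2"
      have m2: "n - T k = 2 * m" unfolding m_def using ev by (metis even_two_times_div_two)
      have mn: "m \<le> n" using m2 by linarith
      have an: "n \<le> a" unfolding a_def N_def using kn by presburger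
      have aN: "a \<le> N" unfolding a_def by (rule order_trans[OF div_le_dividend diff_le_self])
      have "a * 2 \<le> N - k" unfolding a_def by (rule div_times_less_eq_dividend)
      hence "2 * a \<le> N" by linarith
      hence mb: "m \<le> N - a" using mn unfolding N_def by linarith
      have "fps_nth (G N a) (2 * m) = fps_nth (G (a + (N - a)) a) (2 * m)" using aN by simp
      also have "\<dots> = int (PP a m)" using G_box[OF mb] .
      also have "\<dots> = int (p m)" using p_eq[of m a] mn an by simp
      finally have "fps_nth (aa N k) n = int (p m)" using e m2 by simp
      then show ?thesis using True ev unfolding N_def[symmetric] m_def[symmetric] by simp
    qed
  qed
qed

lemma main: "p_d n = (\<Sum>t\<in>{t. t \<le> n \<and> triangular t \<and> even (n - t)}. p ((n - t) div 2))"
proof -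
  define N where "N = 3 * n + 1"
  define A where "A = {k \<in> {..N}. T k \<le> n \<and> even (n - T k)}"
  have img: "T ` A = {t. t \<le> n \<and> triangular t \<and> even (n - t)}"
  proof (intro equalityI subsetI)
    fix t assume "t \<in> T ` A"
    then show "t \<in> {t. t \<le> n \<and> triangular t \<and> even (n - t)}"
      unfolding A_def triangular_def T_def by auto
  next
    fix t assume t: "t \<in> {t. t \<le> n \<and> triangular t \<and> even (n - t)}"
    then obtain k where k: "t = T k" unfolding triangular_def T_def by auto
    have "k \<le> N" using T_ge[of k] t k unfolding N_def by simp
    then show "t \<in> T ` A" using t k unfolding A_def by auto
  qed
  have inj: "inj_on T A" using strict_mono_imp_inj_on[OF T_strict] by (rule inj_on_subset) (rule subset_UNIV)
  have "int (p_d n) = fps_nth (Dp N) n" using Dp_nth[of N n] p_d_eq[of n N] unfolding N_def by (simp del: Dp.simps)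
  also have "\<dots> = (\<Sum>k\<le>N. fps_nth (aa N k) n)" unfolding Dp_gauss by (simp add: fps_sum_nth)
  also have "\<dots> = (\<Sum>k\<le>N. if T k \<le> n \<and> even (n - T k) then int (p ((n - T k) div 2)) else 0)"
  proof (rule sum.cong)
    fix k assume "k \<in> {..N}"
    hence kN: "k \<le> 3 * n + 1" by (simp add: N_def)
    show "fps_nth (aa N k) n = (if T k \<le> n \<and> even (n - T k) then int (p ((n - T k) div 2)) else 0)"
      unfolding N_def by (rule coeff_k[OF kN])
  qed simp
  also have "\<dots> = (\<Sum>k\<in>A. int (p ((n - T k) div 2)))"
    unfolding A_def by (rule sum.inter_filter[symmetric]) simp
  also have "\<dots> = (\<Sum>t\<in>T ` A. int (p ((n - t) div 2)))"
    using sum.reindex[OF inj, of "\<lambda>t. int (p ((n - t) div 2))"] by simp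
  also have "\<dots> = int (\<Sum>t\<in>{t. t \<le> n \<and> triangular t \<and> even (n - t)}. p ((n - t) div 2))"
    unfolding img by simp
  finally show ?thesis by linarith
qed

theorem theorem1:
  shows "(\<forall>n::nat. n \<ge> 1 \<longrightarrow> even n \<longrightarrow>
            (\<Sum>t\<in>{t. t \<le> n \<and> triangular t \<and> even t}. p ((n - t) div 2)) = p_d n)
       \<and> (\<forall>n::nat. n \<ge> 1 \<longrightarrow> odd n \<longrightarrow>
            (\<Sum>t\<in>{t. t \<le> n \<and> triangular t \<and> odd t}. p ((n - t) div 2)) = p_o n)"
proof (intro conjI allI impI)
  fix n :: nat assume "even n"
  have "{t. t \<le> n \<and> triangular t \<and> even t} = {t. t \<le> n \<and> triangular t \<and> even (n - t)}"
  proof (intro Collect_cong)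
    fix t show "(t \<le> n \<and> triangular t \<and> even t) = (t \<le> n \<and> triangular t \<and> even (n - t))"
      using \<open>even n\<close> by (cases "t \<le> n") (auto simp: even_diff_nat)
  qed
  then show "(\<Sum>t\<in>{t. t \<le> n \<and> triangular t \<and> even t}. p ((n - t) div 2)) = p_d n"
    using main[of n] by simp
next
  fix n :: nat assume "odd n"
  have "{t. t \<le> n \<and> triangular t \<and> odd t} = {t. t \<le> n \<and> triangular t \<and> even (n - t)}"
  proof (intro Collect_cong)
    fix t show "(t \<le> n \<and> triangular t \<and> odd t) = (t \<le> n \<and> triangular t \<and> even (n - t))"
      using \<open>odd n\<close> by (cases "t \<le> n") (auto simp: even_diff_nat)
  qed
  then show "(\<Sum>t\<in>{t. t \<le> n \<and> triangular t \<and> odd t}. p ((n - t) div 2)) = p_o n"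
    using main[of n] euler[of n] by simp
qed


end
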